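(* Suppose $X \in M_m^{S}\otimes M_n^{S}$ and let $B \in M_m\otimes M_n$ be any matrix with $X = \tfrac14\big(B + B^T + B^\Gamma + (B^T)^\Gamma\big)$. Then \[ \mu^{\mathbb{C}}_{\min}(X) \ge W^{1+i}_{\min}(B) \quad\text{and}\quad \mu^{\mathbb{C}}_{\max}(X) \le W^{1+i}_{\max}(B). \]
   Context: $M_n$ denotes real $n\times n$ matrices, $M_n^S$ the real symmetric ones, and $M_m\otimes M_n$ is identified with $M_{mn}$ via the Kronecker product; $M_m^S\otimes M_n^S$ is the span of $Y\otimes Z$ with $Y\in M_m^S$, $Z\in M_n^S$ (equivalently, real $X$ with $X = X^T = X^\Gamma$). For $A = \sum_j X_j \otimes Y_j$, the partial transpose is $A^\Gamma = \sum_j X_j \otimes Y_j^T$. $\mu^{\mathbb{C}}_{\min}(X) = \min\{(\mathbf{v}\otimes\mathbf{w})^*X(\mathbf{v}\otimes\mathbf{w}) : \mathbf{v}\in\mathbb{C}^m,\mathbf{w}\in\mathbb{C}^n,\|\mathbf{v}\|=\|\mathbf{w}\|=1\}$ and $\mu^{\mathbb{C}}_{\max}(X)$ is the corresponding maximum. The numerical range of $A\in M_N(\mathbb{C})$ is $W(A) = \{\mathbf{x}^*A\mathbf{x} : \mathbf{x}\in\mathbb{C}^N, \|\mathbf{x}\|=1\}$. For real $B$, $W^{1+i}(B) = \{c\in\mathbb{R} : c(1+i)\in W(B+iB^\Gamma)\}$, a nonempty compact interval with minimum $W^{1+i}_{\min}(B)$ and maximum $W^{1+i}_{\max}(B)$.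 *)

theory Defs
  imports "HOL-Analysis.Analysis"
begin

text \<open>Matrices in M_m (x) M_n are represented as real matrices indexed by the
product type 'm * 'n (row index (i,j), column index (k,l)); this is the
Kronecker identification of M_m (x) M_n with M_mn.\<close>

type_synonym ('m, 'n) bimat = "real ^ ('m \<times> 'n) ^ ('m \<times> 'n)"

definition kron :: "real ^ 'm::finite ^ 'm \<Rightarrow> real ^ 'n::finite ^ 'n \<Rightarrow> ('m, 'n) bimat" where
  "kron Y Z = (\<chi> r c. Y $ fst r $ fst c * Z $ snd r $ snd c)"

definition sym_mat :: "real ^ 'k::finite ^ 'k \<Rightarrow> bool" where
  "sym_mat Y \<longleftrightarrow> transpose Y = Y"

text \<open>Partial transpose on the second factor: (Y (x) Z)^Gamma = Y (x) Z^T.\<close>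
definition ptrans :: "('m::finite, 'n::finite) bimat \<Rightarrow> ('m, 'n) bimat" where
  "ptrans A = (\<chi> r c. A $ (fst r, snd c) $ (fst c, snd r))"

definition symsym :: "('m::finite, 'n::finite) bimat set" where
  "symsym = span {kron Y Z | Y Z. sym_mat Y \<and> sym_mat Z}"

definition prod_vals :: "('m::finite, 'n::finite) bimat \<Rightarrow> real set" where
  "prod_vals X = {c. \<exists>(v::complex^'m) (w::complex^'n). norm v = 1 \<and> norm w = 1 \<and>
     complex_of_real c = (\<Sum>r\<in>UNIV. \<Sum>s\<in>UNIV.
        cnj (v $ fst r * w $ snd r) * complex_of_real (X $ r $ s) * (v $ fst s * w $ snd s))}"

definition mu_min_C :: "('m::finite, 'n::finite) bimat \<Rightarrow> real" where
  "mu_min_C X = Inf (prod_vals X)"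

definition mu_max_C :: "('m::finite, 'n::finite) bimat \<Rightarrow> real" where
  "mu_max_C X = Sup (prod_vals X)"

definition numrange :: "complex ^ 'k ^ 'k \<Rightarrow> complex set" where
  "numrange A = {(\<Sum>i\<in>UNIV. \<Sum>j\<in>UNIV. cnj (x $ i) * A $ i $ j * x $ j) | x::complex^'k::finite. norm x = 1}"

definition cmat :: "real ^ 'k::finite ^ 'k \<Rightarrow> complex ^ 'k ^ 'k" where
  "cmat A = (\<chi> i j. complex_of_real (A $ i $ j))"

definition W1i :: "('m::finite, 'n::finite) bimat \<Rightarrow> real set" where
  "W1i B = {c::real. complex_of_real c * (1 + \<i>) \<in> numrange (\<chi> r s. cmat B $ r $ s + \<i> * cmat (ptrans B) $ r $ s)}"

definition W1i_min :: "('m::finite, 'n::finite) bimat \<Rightarrow> real" where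
  "W1i_min B = Inf (W1i B)"

definition W1i_max :: "('m::finite, 'n::finite) bimat \<Rightarrow> real" where
  "W1i_max B = Sup (W1i B)"

end

theory Submission
  imports Defs
begin

lemma symsym_props:
  fixes X :: "('m::finite, 'n::finite) bimat"
  assumes "X \<in> symsym"
  shows "X $ (k,j) $ (i,l) = X $ (i,j) $ (k,l) \<and> X $ (i,l) $ (k,j) = X $ (i,j) $ (k,l)"
proof -
  have "X \<in> span {kron Y Z | Y Z. sym_mat Y \<and> sym_mat Z}" using assms by (simp add: symsym_def)
  then have "\<forall>i j k l. X $ (k,j) $ (i,l) = X $ (i,j) $ (k,l) \<and> X $ (i,l) $ (k,j) = X $ (i,j) $ (k,l)"
  proof (induct rule: span_induct_alt)
    case base then show ?case by simp
  next
    case (step c x y)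
    then obtain Y Z where x: "x = kron Y Z" "sym_mat Y" "sym_mat Z" by blast
    have Y: "Y $ a $ b = Y $ b $ a" for a b using x(2) unfolding sym_mat_def
      by (metis transpose_def vec_lambda_beta)
    have Z: "Z $ a $ b = Z $ b $ a" for a b using x(3) unfolding sym_mat_def
      by (metis transpose_def vec_lambda_beta)
    show ?case using step(2) by (simp add: x(1) kron_def Y[of _ i] Z[of _ j] Y Z)
  qed
  then show ?thesis by blast
qed

lemma sum_invol:
  fixes g :: "'a::finite \<Rightarrow> 'b::comm_monoid_add"
  assumes "\<And>x. f (f x) = x"
  shows "sum g UNIV = sum (\<lambda>x. g (f x)) UNIV"
  by (rule sum.reindex_bij_witness[of _ f f]) (auto simp: assms)

definition phi :: "('m::finite, 'n::finite) bimat \<Rightarrow> ('m \<Rightarrow> real) \<Rightarrow> ('n \<Rightarrow> real) \<Rightarrow> real" where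
  "phi X p q = (\<Sum>(r,s)\<in>UNIV. p (fst r) * q (snd r) * X$r$s * p (fst s) * q (snd s))"

lemma phi_ptrans: "phi (ptrans B) p q = phi B p q"
proof -
  have "phi B p q = (\<Sum>x\<in>UNIV. (\<lambda>(r,s). p (fst r) * q (snd r) * B$r$s * p (fst s) * q (snd s))
       ((\<lambda>((i,j),(k,l)). ((i,l),(k,j))) x))"
    unfolding phi_def by (rule sum_invol) auto
  also have "\<dots> = phi (ptrans B) p q" unfolding phi_def ptrans_def
    by (rule sum.cong) (auto simp: algebra_simps)
  finally show ?thesis by simp
qed

lemma phi_transpose: "phi (transpose B) p q = phi B p q"
proof -
  have "phi B p q = (\<Sum>x\<in>UNIV. (\<lambda>(r,s). p (fst r) * q (snd r) * B$r$s * p (fst s) * q (snd s))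
       ((\<lambda>(r,s). (s,r)) x))"
    unfolding phi_def by (rule sum_invol) auto
  also have "\<dots> = phi (transpose B) p q" unfolding phi_def transpose_def
    by (rule sum.cong) (auto simp: algebra_simps)
  finally show ?thesis by simp
qed

lemma phi_add: "phi (A + C) p q = phi A p q + phi C p q"
  unfolding phi_def by (simp add: sum.distrib[symmetric] case_prod_beta algebra_simps)

lemma phi_scale: "phi (c *\<^sub>R A) p q = c * phi A p q"
  unfolding phi_def by (simp add: sum_distrib_left case_prod_beta algebra_simps)

lemma phi_X:
  assumes "X = (1/4) *\<^sub>R (B + transpose B + ptrans B + ptrans (transpose B))"
  shows "phi X p q = phi B p q"
  using assms by (simp add: phi_add phi_scale phi_ptrans phi_transpose)


lemma sum_pairs: "(\<Sum>r\<in>UNIV. \<Sum>s\<in>UNIV. f r s) = (\<Sum>(r,s)\<in>(UNIV::('a::finite \<times> 'b::finite) set). f r s)"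
  by (simp add: sum.cartesian_product)

lemma sumsq_prod:
  fixes p :: "'m::finite \<Rightarrow> real" and q :: "'n::finite \<Rightarrow> real"
  shows "(\<Sum>r\<in>UNIV. (p (fst r) * q (snd r))^2) = (\<Sum>i\<in>UNIV. (p i)^2) * (\<Sum>j\<in>UNIV. (q j)^2)"
proof -
  have "(\<Sum>r\<in>UNIV. (p (fst r) * q (snd r))^2) = (\<Sum>(i,j)\<in>(UNIV::('m\<times>'n) set). (p i)^2 * (q j)^2)"
    by (rule sum.cong) (auto simp: power_mult_distrib)
  also have "\<dots> = (\<Sum>i\<in>UNIV. \<Sum>j\<in>UNIV. (p i)^2 * (q j)^2)" by (simp add: sum.cartesian_product)
  also have "\<dots> = (\<Sum>i\<in>UNIV. (p i)^2) * (\<Sum>j\<in>UNIV. (q j)^2)"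
    by (simp add: sum_product)
  finally show ?thesis .
qed

lemma real_prod_in_W1i:
  fixes X B :: "('m::finite, 'n::finite) bimat"
  assumes XB: "X = (1/4) *\<^sub>R (B + transpose B + ptrans B + ptrans (transpose B))"
    and p: "(\<Sum>i\<in>UNIV. (p i)^2) = 1" and q: "(\<Sum>j\<in>UNIV. (q j)^2) = 1"
  shows "phi X p q \<in> W1i B"
proof -
  define y :: "complex ^ ('m \<times> 'n)" where "y = (\<chi> r. complex_of_real (p (fst r) * q (snd r)))"
  have ny: "norm y = 1"
    unfolding norm_vec_def L2_set_def y_def using sumsq_prod[of p q] p q
    by (simp add: power_mult_distrib norm_mult)
  have "(\<Sum>i\<in>UNIV. \<Sum>j\<in>UNIV. cnj (y $ i) * (\<chi> r s. cmat B $ r $ s + \<i> * cmat (ptrans B) $ r $ s) $ i $ j * y $ j)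
     = (\<Sum>(r,s)\<in>UNIV. complex_of_real (p (fst r) * q (snd r) * B$r$s * p (fst s) * q (snd s))
          + \<i> * complex_of_real (p (fst r) * q (snd r) * ptrans B$r$s * p (fst s) * q (snd s)))"
    unfolding sum_pairs y_def cmat_def
    by (rule sum.cong) (auto simp: algebra_simps)
  also have "\<dots> = complex_of_real (phi B p q) + \<i> * complex_of_real (phi (ptrans B) p q)"
    unfolding phi_def by (simp add: sum.distrib sum_distrib_left case_prod_beta)
  also have "\<dots> = complex_of_real (phi X p q) * (1 + \<i>)"
    using phi_X[OF XB] phi_ptrans by (simp add: algebra_simps)
  finally have e: "complex_of_real (phi X p q) * (1 + \<i>) = (\<Sum>i\<in>UNIV. \<Sum>j\<in>UNIV. cnj (y $ i) * (\<chi> r s. cmat B $ r $ s + \<i> * cmat (ptrans B) $ r $ s) $ i $ j * y $ j)" by simp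
  show ?thesis unfolding W1i_def numrange_def mem_Collect_eq using ny e by blast
qed

lemma numrange_bound:
  fixes A :: "complex ^ ('k::finite) ^ 'k"
  assumes "z \<in> numrange A"
  shows "norm z \<le> (\<Sum>i\<in>UNIV. \<Sum>j\<in>UNIV. norm (A $ i $ j))"
proof -
  obtain x :: "complex ^ 'k" where x: "norm x = 1"
    and z: "z = (\<Sum>i\<in>UNIV. \<Sum>j\<in>UNIV. cnj (x $ i) * A $ i $ j * x $ j)"
    using assms unfolding numrange_def by blast
  have c: "norm (x $ i) \<le> 1" for i by (metis Finite_Cartesian_Product.norm_nth_le x)
  have "norm z \<le> (\<Sum>i\<in>UNIV. norm (\<Sum>j\<in>UNIV. cnj (x $ i) * A $ i $ j * x $ j))"
    unfolding z by (rule norm_sum)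
  also have "\<dots> \<le> (\<Sum>i\<in>UNIV. \<Sum>j\<in>UNIV. norm (cnj (x $ i) * A $ i $ j * x $ j))"
    by (intro sum_mono norm_sum)
  also have "\<dots> \<le> (\<Sum>i\<in>UNIV. \<Sum>j\<in>UNIV. norm (A $ i $ j))"
  proof (intro sum_mono)
    fix i j
    have "norm (cnj (x $ i) * A $ i $ j * x $ j) = norm (x $ i) * norm (A $ i $ j) * norm (x $ j)"
      by (simp add: norm_mult)
    also have "\<dots> \<le> 1 * norm (A $ i $ j) * 1"
      using c[of i] c[of j] by (intro mult_mono) auto
    finally show "norm (cnj (x $ i) * A $ i $ j * x $ j) \<le> norm (A $ i $ j)" by simp
  qed
  finally show ?thesis .
qed

lemma W1i_bounded:
  fixes B :: "('m::finite, 'n::finite) bimat"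
  shows "\<exists>K. \<forall>c\<in>W1i B. \<bar>c\<bar> \<le> K"
proof -
  let ?A = "(\<chi> r s. cmat B $ r $ s + \<i> * cmat (ptrans B) $ r $ s)"
  let ?K = "(\<Sum>i\<in>UNIV. \<Sum>j\<in>UNIV. norm (?A $ i $ j))"
  have "\<bar>c\<bar> \<le> ?K" if "c \<in> W1i B" for c
  proof -
    have "norm (complex_of_real c * (1 + \<i>)) \<le> ?K"
      using that unfolding W1i_def by (intro numrange_bound) auto
    moreover have "norm (complex_of_real c * (1 + \<i>)) = \<bar>c\<bar> * sqrt 2"
      by (simp add: norm_mult cmod_def real_sqrt_mult)
    moreover have "\<bar>c\<bar> \<le> \<bar>c\<bar> * sqrt 2" by (simp add: mult_le_cancel_left1)
    ultimately show ?thesis by linarith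
  qed
  then show ?thesis by blast
qed


lemma four_id:
  fixes a b :: complex
  shows "a * b + cnj a * b + a * cnj b + cnj a * cnj b = complex_of_real (4 * Re a * Re b)"
proof -
  have "a * b + cnj a * b + a * cnj b + cnj a * cnj b = (a + cnj a) * (b + cnj b)"
    by (simp add: algebra_simps)
  also have "\<dots> = complex_of_real (4 * Re a * Re b)" by (simp add: complex_add_cnj)
  finally show ?thesis .
qed

lemma prod_val_decomp:
  fixes X :: "('m::finite, 'n::finite) bimat" and v :: "complex^'m" and w :: "complex^'n"
  assumes "X \<in> symsym"
  shows "(\<Sum>r\<in>UNIV. \<Sum>s\<in>UNIV.
        cnj (v $ fst r * w $ snd r) * complex_of_real (X $ r $ s) * (v $ fst s * w $ snd s))
     = complex_of_real (phi X (\<lambda>i. Re (v$i)) (\<lambda>j. Re (w$j)) + phi X (\<lambda>i. Re (v$i)) (\<lambda>j. Im (w$j))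
          + phi X (\<lambda>i. Im (v$i)) (\<lambda>j. Re (w$j)) + phi X (\<lambda>i. Im (v$i)) (\<lambda>j. Im (w$j)))"
    (is "?S = _")
proof -
  have sy: "X $ (k,j) $ (i,l) = X $ (i,j) $ (k,l)" "X $ (i,l) $ (k,j) = X $ (i,j) $ (k,l)" for i j k l
    using symsym_props[OF assms] by auto
  have sy3: "X $ (k,l) $ (i,j) = X $ (i,j) $ (k,l)" for i j k l
    using sy by metis
  define T where "T = (\<lambda>(r::'m\<times>'n, s::'m\<times>'n). cnj (v $ fst r * w $ snd r) * (v $ fst s * w $ snd s))"
  define F where "F = (\<lambda>(r::'m\<times>'n, s::'m\<times>'n). complex_of_real (X $ r $ s) * T (r,s))"
  define s1 where "s1 = (\<lambda>(r::'m\<times>'n, s::'m\<times>'n). ((fst s, snd r), (fst r, snd s)))"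
  define s2 where "s2 = (\<lambda>(r::'m\<times>'n, s::'m\<times>'n). ((fst r, snd s), (fst s, snd r)))"
  define s3 where "s3 = (\<lambda>(r::'m\<times>'n, s::'m\<times>'n). (s, r))"
  have S: "?S = sum F UNIV" unfolding sum_pairs F_def T_def
    by (rule sum.cong) (auto simp: algebra_simps)
  have e1: "sum F UNIV = (\<Sum>x\<in>UNIV. complex_of_real (X $ fst x $ snd x) * T (s1 x))"
  proof -
    have "sum F UNIV = (\<Sum>x\<in>UNIV. F (s1 x))" by (rule sum_invol) (auto simp: s1_def)
    also have "\<dots> = (\<Sum>x\<in>UNIV. complex_of_real (X $ fst x $ snd x) * T (s1 x))"
      by (rule sum.cong) (auto simp: F_def s1_def sy)
    finally show ?thesis .
  qed
  have e2: "sum F UNIV = (\<Sum>x\<in>UNIV. complex_of_real (X $ fst x $ snd x) * T (s2 x))"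
  proof -
    have "sum F UNIV = (\<Sum>x\<in>UNIV. F (s2 x))" by (rule sum_invol) (auto simp: s2_def)
    also have "\<dots> = (\<Sum>x\<in>UNIV. complex_of_real (X $ fst x $ snd x) * T (s2 x))"
      by (rule sum.cong) (auto simp: F_def s2_def sy)
    finally show ?thesis .
  qed
  have e3: "sum F UNIV = (\<Sum>x\<in>UNIV. complex_of_real (X $ fst x $ snd x) * T (s3 x))"
  proof -
    have "sum F UNIV = (\<Sum>x\<in>UNIV. F (s3 x))" by (rule sum_invol) (auto simp: s3_def)
    also have "\<dots> = (\<Sum>x\<in>UNIV. complex_of_real (X $ fst x $ snd x) * T (s3 x))"
      by (rule sum.cong) (auto simp: F_def s3_def sy3)
    finally show ?thesis .
  qed
  have e0: "sum F UNIV = (\<Sum>x\<in>UNIV. complex_of_real (X $ fst x $ snd x) * T x)"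
    unfolding F_def by (simp add: case_prod_beta)
  define P where "P = (\<lambda>(x::('m\<times>'n)\<times>('m\<times>'n)).
      (Re (v $ fst (fst x)) * Re (v $ fst (snd x)) + Im (v $ fst (fst x)) * Im (v $ fst (snd x)))
    * (Re (w $ snd (fst x)) * Re (w $ snd (snd x)) + Im (w $ snd (fst x)) * Im (w $ snd (snd x))))"
  have pt: "T x + T (s1 x) + T (s2 x) + T (s3 x) = complex_of_real (4 * P x)" for x
  proof -
    obtain i j k l where x: "x = ((i,j),(k,l))" by (metis prod.collapse)
    have "T x + T (s1 x) + T (s2 x) + T (s3 x) =
      (cnj (v$i) * v$k) * (cnj (w$j) * w$l) + cnj (cnj (v$i) * v$k) * (cnj (w$j) * w$l)
      + (cnj (v$i) * v$k) * cnj (cnj (w$j) * w$l) + cnj (cnj (v$i) * v$k) * cnj (cnj (w$j) * w$l)"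
      by (simp add: x T_def s1_def s2_def s3_def algebra_simps)
    also have "\<dots> = complex_of_real (4 * P x)" unfolding four_id
      by (simp add: x P_def)
    finally show ?thesis .
  qed
  have "4 * sum F UNIV = (\<Sum>x\<in>UNIV. complex_of_real (X $ fst x $ snd x) * (T x + T (s1 x) + T (s2 x) + T (s3 x)))"
    using e0 e1 e2 e3 by (simp add: sum.distrib distrib_left)
  also have "\<dots> = (\<Sum>x\<in>UNIV. complex_of_real (X $ fst x $ snd x) * complex_of_real (4 * P x))"
    by (simp only: pt)
  also have "\<dots> = 4 * complex_of_real (\<Sum>x\<in>UNIV. X $ fst x $ snd x * P x)"
    by (simp add: sum_distrib_left algebra_simps)
  finally have "sum F UNIV = complex_of_real (\<Sum>x\<in>UNIV. X $ fst x $ snd x * P x)" by simp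
  also have "(\<Sum>x\<in>UNIV. X $ fst x $ snd x * P x) = phi X (\<lambda>i. Re (v$i)) (\<lambda>j. Re (w$j)) + phi X (\<lambda>i. Re (v$i)) (\<lambda>j. Im (w$j))
          + phi X (\<lambda>i. Im (v$i)) (\<lambda>j. Re (w$j)) + phi X (\<lambda>i. Im (v$i)) (\<lambda>j. Im (w$j))"
    unfolding phi_def P_def by (simp add: sum.distrib[symmetric] case_prod_beta algebra_simps)
  finally show ?thesis using S by simp
qed


lemma phi_scale_args: "phi X (\<lambda>i. a * p i) (\<lambda>j. b * q j) = (a*b)^2 * phi X p q"
  unfolding phi_def by (simp add: sum_distrib_left case_prod_beta algebra_simps power2_eq_square)

lemma phi_zero_p: "phi X (\<lambda>i. 0) q = 0" unfolding phi_def by simp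
lemma phi_zero_q: "phi X p (\<lambda>i. 0) = 0" unfolding phi_def by simp

lemma phi_bounds:
  fixes X B :: "('m::finite, 'n::finite) bimat"
  assumes XB: "X = (1/4) *\<^sub>R (B + transpose B + ptrans B + ptrans (transpose B))"
    and bb: "bdd_below (W1i B)" and ba: "bdd_above (W1i B)"
  shows "Inf (W1i B) * ((\<Sum>i\<in>UNIV. (p i)^2) * (\<Sum>j\<in>UNIV. (q j)^2)) \<le> phi X p q
       \<and> phi X p q \<le> Sup (W1i B) * ((\<Sum>i\<in>UNIV. (p i)^2) * (\<Sum>j\<in>UNIV. (q j)^2))"
proof -
  define np where "np = (\<Sum>i\<in>UNIV. (p i)^2)"
  define nq where "nq = (\<Sum>j\<in>UNIV. (q j)^2)"
  have np0: "np \<ge> 0" "nq \<ge> 0" unfolding np_def nq_def by (auto intro: sum_nonneg)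
  show ?thesis
  proof (cases "np = 0 \<or> nq = 0")
    case True
    then have "p = (\<lambda>i. 0) \<or> q = (\<lambda>i. 0)" unfolding np_def nq_def
      by (auto simp: sum_nonneg_eq_0_iff fun_eq_iff)
    then have "phi X p q = 0" using phi_zero_p phi_zero_q by auto
    then show ?thesis using True unfolding np_def[symmetric] nq_def[symmetric] by auto
  next
    case False
    then have pos: "np > 0" "nq > 0" using np0 by auto
    define a where "a = 1 / sqrt np"
    define b where "b = 1 / sqrt nq"
    have "(\<Sum>i\<in>UNIV. (a * p i)^2) = a^2 * np" unfolding np_def
      by (simp add: power_mult_distrib sum_distrib_left)
    also have "\<dots> = 1" using pos by (simp add: a_def power_divide)
    finally have 1: "(\<Sum>i\<in>UNIV. (a * p i)^2) = 1" .
    have "(\<Sum>j\<in>UNIV. (b * q j)^2) = b^2 * nq" unfolding nq_def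
      by (simp add: power_mult_distrib sum_distrib_left)
    also have "\<dots> = 1" using pos by (simp add: b_def power_divide)
    finally have 2: "(\<Sum>j\<in>UNIV. (b * q j)^2) = 1" .
    have mem: "(a*b)^2 * phi X p q \<in> W1i B"
      using real_prod_in_W1i[OF XB 1 2] phi_scale_args by metis
    have ab: "(a*b)^2 * (np * nq) = 1" using pos
      by (simp add: a_def b_def power_mult_distrib power_divide)
    have abpos: "(a*b)^2 > 0" using pos by (simp add: a_def b_def)
    have lo: "Inf (W1i B) \<le> (a*b)^2 * phi X p q" by (rule cInf_lower[OF mem bb])
    have hi: "(a*b)^2 * phi X p q \<le> Sup (W1i B)" by (rule cSup_upper[OF mem ba])
    have "phi X p q = (np*nq) * ((a*b)^2 * phi X p q)" using ab by (simp add: algebra_simps)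
    moreover have "np * nq > 0" using pos by simp
    ultimately show ?thesis using lo hi unfolding np_def[symmetric] nq_def[symmetric]
      by (metis mult.commute mult_left_mono less_imp_le)
  qed
qed

theorem corollary5p2:
  fixes X B :: "('m::finite, 'n::finite) bimat"
  assumes "X \<in> symsym"
    and "X = (1/4) *\<^sub>R (B + transpose B + ptrans B + ptrans (transpose B))"
  shows "mu_min_C X \<ge> W1i_min B \<and> mu_max_C X \<le> W1i_max B"
proof -
  obtain K where K: "\<forall>c\<in>W1i B. \<bar>c\<bar> \<le> K" using W1i_bounded by blast
  have bb: "bdd_below (W1i B)" unfolding bdd_below_def using K
    by (metis abs_le_D2 minus_le_iff)
  have ba: "bdd_above (W1i B)" unfolding bdd_above_def using K by (metis abs_le_D1)
  have nrm: "(\<Sum>i\<in>UNIV. (Re (v$i))^2) + (\<Sum>i\<in>UNIV. (Im (v$i))^2) = 1"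
    if "norm v = 1" for v :: "complex ^ 'k::finite"
  proof -
    have "(norm v)^2 = (\<Sum>i\<in>UNIV. (norm (v$i))^2)" unfolding norm_vec_def L2_set_def
      by (simp add: sum_nonneg)
    then show ?thesis using that by (simp add: cmod_power2 sum.distrib)
  qed
  have bnd: "W1i_min B \<le> c \<and> c \<le> W1i_max B" if cP: "c \<in> prod_vals X" for c
  proof -
    obtain v :: "complex^'m" and w :: "complex^'n" where vw: "norm v = 1" "norm w = 1"
      and c: "complex_of_real c = (\<Sum>r\<in>UNIV. \<Sum>s\<in>UNIV.
        cnj (v $ fst r * w $ snd r) * complex_of_real (X $ r $ s) * (v $ fst s * w $ snd s))"
      using cP unfolding prod_vals_def by blast
    define p1 where "p1 = (\<lambda>i. Re (v$i))"
    define p2 where "p2 = (\<lambda>i. Im (v$i))"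
    define q1 where "q1 = (\<lambda>i. Re (w$i))"
    define q2 where "q2 = (\<lambda>i. Im (w$i))"
    have ceq: "c = phi X p1 q1 + phi X p1 q2 + phi X p2 q1 + phi X p2 q2"
    proof -
      have "complex_of_real c = complex_of_real (phi X p1 q1 + phi X p1 q2 + phi X p2 q1 + phi X p2 q2)"
        unfolding c p1_def p2_def q1_def q2_def by (rule prod_val_decomp[OF assms(1)])
      then show ?thesis by (simp only: of_real_eq_iff)
    qed
    define a1 where "a1 = (\<Sum>i\<in>UNIV. (p1 i)^2)"
    define a2 where "a2 = (\<Sum>i\<in>UNIV. (p2 i)^2)"
    define b1 where "b1 = (\<Sum>i\<in>UNIV. (q1 i)^2)"
    define b2 where "b2 = (\<Sum>i\<in>UNIV. (q2 i)^2)"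
    have s: "a1 + a2 = 1" "b1 + b2 = 1" using nrm[OF vw(1)] nrm[OF vw(2)]
      unfolding a1_def a2_def b1_def b2_def p1_def p2_def q1_def q2_def by auto
    have e: "a1*b1 + a1*b2 + a2*b1 + a2*b2 = 1"
    proof -
      have "(a1+a2)*(b1+b2) = 1" using s by simp
      then show ?thesis by (simp add: algebra_simps)
    qed
    note B = phi_bounds[OF assms(2) bb ba]
    have l1: "W1i_min B * (a1*b1) \<le> phi X p1 q1 \<and> phi X p1 q1 \<le> W1i_max B * (a1*b1)"
      using B[of p1 q1] unfolding a1_def b1_def W1i_min_def W1i_max_def by blast
    have l2: "W1i_min B * (a1*b2) \<le> phi X p1 q2 \<and> phi X p1 q2 \<le> W1i_max B * (a1*b2)"
      using B[of p1 q2] unfolding a1_def b2_def W1i_min_def W1i_max_def by blast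
    have l3: "W1i_min B * (a2*b1) \<le> phi X p2 q1 \<and> phi X p2 q1 \<le> W1i_max B * (a2*b1)"
      using B[of p2 q1] unfolding a2_def b1_def W1i_min_def W1i_max_def by blast
    have l4: "W1i_min B * (a2*b2) \<le> phi X p2 q2 \<and> phi X p2 q2 \<le> W1i_max B * (a2*b2)"
      using B[of p2 q2] unfolding a2_def b2_def W1i_min_def W1i_max_def by blast
    have d1: "W1i_min B = W1i_min B * (a1*b1) + W1i_min B * (a1*b2) + W1i_min B * (a2*b1) + W1i_min B * (a2*b2)"
    proof -
      have "W1i_min B = W1i_min B * (a1*b1 + a1*b2 + a2*b1 + a2*b2)" using e by simp
      then show ?thesis by (simp only: distrib_left)
    qed
    have d2: "W1i_max B = W1i_max B * (a1*b1) + W1i_max B * (a1*b2) + W1i_max B * (a2*b1) + W1i_max B * (a2*b2)"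
    proof -
      have "W1i_max B = W1i_max B * (a1*b1 + a1*b2 + a2*b1 + a2*b2)" using e by simp
      then show ?thesis by (simp only: distrib_left)
    qed
    have lo: "W1i_min B \<le> c" using ceq d1 l1 l2 l3 l4 by linarith
    have hi: "c \<le> W1i_max B" using ceq d2 l1 l2 l3 l4 by linarith
    show ?thesis using lo hi by simp
  qed
  have ne: "prod_vals X \<noteq> {}"
  proof -
    obtain v :: "complex^'m" where v: "norm v = 1" using vector_choose_size[of 1] by auto
    obtain w :: "complex^'n" where w: "norm w = 1" using vector_choose_size[of 1] by auto
    let ?c = "phi X (\<lambda>i. Re (v $ i)) (\<lambda>j. Re (w $ j)) + phi X (\<lambda>i. Re (v $ i)) (\<lambda>j. Im (w $ j))
       + phi X (\<lambda>i. Im (v $ i)) (\<lambda>j. Re (w $ j)) + phi X (\<lambda>i. Im (v $ i)) (\<lambda>j. Im (w $ j))"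
    have "?c \<in> prod_vals X" unfolding prod_vals_def mem_Collect_eq
      using prod_val_decomp[OF assms(1), of v w, symmetric] v w by blast
    then show ?thesis by blast
  qed
  show ?thesis unfolding mu_min_C_def mu_max_C_def
    using bnd ne by (auto intro: cInf_greatest cSup_least)
qed

end
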